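(* Let $A = \begin{pmatrix} 1 & 2 \\ 0 & 1 \end{pmatrix}$, $B = \begin{pmatrix} 1 & 0 \\ 2 & 1 \end{pmatrix}$ and $C = \begin{pmatrix} 2 & 1 \\ 1 & 1 \end{pmatrix}$, viewed as matrices over $\mathbb{Z}$. Then the semigroup generated by $A$, $B$, $C$ under matrix multiplication is free on $\{A, B, C\}$. That is, if $w_1 \cdots w_m$ and $v_1 \cdots v_k$ are products with each $w_i, v_j \in \{A,B,C\}$ and $w_1\cdots w_m = v_1 \cdots v_k$ as matrices, then $m = k$ and $w_i = v_i$ for all $i$. *)

theory Defs
  imports "HOL-Analysis.Analysis"
begin

definition matA :: "int^2^2" where
  "matA = vector [vector [1, 2], vector [0, 1]]"

definition matB :: "int^2^2" where
  "matB = vector [vector [1, 0], vector [2, 1]]"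

definition matC :: "int^2^2" where
  "matC = vector [vector [2, 1], vector [1, 1]]"

definition word_prod :: "(int^2^2) list \<Rightarrow> int^2^2" where
  "word_prod ws = foldr (\<lambda>M P. M ** P) ws (mat 1)"

end

theory Submission
  imports Defs
begin

lemma ent: "((M::int^2^2) ** N) $ i $ j = M$i$1 * N$1$j + M$i$2 * N$2$j"
  by (simp add: matrix_matrix_mult_def sum_2)

lemma meq: "((M::int^2^2) = N) \<longleftrightarrow> (M$1$1=N$1$1 \<and> M$1$2=N$1$2 \<and> M$2$1=N$2$1 \<and> M$2$2=N$2$2)"
  by (auto simp: vec_eq_iff forall_2)

lemma entA: "matA$1$1 = 1" "matA$1$2=2" "matA$2$1=0" "matA$2$2=1" by (simp_all add: matA_def)
lemma entB: "matB$1$1 = 1" "matB$1$2=0" "matB$2$1=2" "matB$2$2=1" by (simp_all add: matB_def)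
lemma entC: "matC$1$1 = 2" "matC$1$2=1" "matC$2$1=1" "matC$2$2=1" by (simp_all add: matC_def)
lemma entI: "(mat 1::int^2^2)$1$1 = 1" "(mat 1::int^2^2)$1$2=0" "(mat 1::int^2^2)$2$1=0" "(mat 1::int^2^2)$2$2=1"
  by (simp_all add: mat_def)

definition inv2 :: "int^2^2 \<Rightarrow> bool" where
  "inv2 Q \<longleftrightarrow> 0 \<le> Q$1$1 \<and> 0 \<le> Q$1$2 \<and> 0 \<le> Q$2$1 \<and> 0 \<le> Q$2$2 \<and>
     Q$1$1 * Q$2$2 - Q$1$2 * Q$2$1 = 1"

lemma inv_step: "M \<in> {matA, matB, matC} \<Longrightarrow> inv2 Q \<Longrightarrow> inv2 (M ** Q)"
  by (auto simp: inv2_def ent entA entB entC algebra_simps)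

lemma inv_wp: "set ws \<subseteq> {matA, matB, matC} \<Longrightarrow> inv2 (word_prod ws)"
proof (induction ws)
  case Nil then show ?case by (simp add: word_prod_def inv2_def entI)
next
  case (Cons a ws) then show ?case using inv_step[of a "word_prod ws"] by (simp add: word_prod_def)
qed

lemma detz: "(a::int) * 0 - b * 0 \<noteq> 1" by simp

lemma AB_int:
  fixes a b c d a' b' c' d' :: int
  assumes "0\<le>a" "0\<le>b" "0\<le>c" "0\<le>d" "0\<le>a'" "0\<le>b'" "0\<le>c'" "0\<le>d'"
    "a'*d'-b'*c' = 1" "a+2*c = a'" "b+2*d = b'" "c = 2*a'+c'" "d = 2*b'+d'"
  shows False
proof -
  have "a' = 0" "b' = 0" using assms by linarith+
  then show False using assms(9) by simp
qed

lemma AC_int: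
  fixes a b c d a' b' c' d' :: int
  assumes "0\<le>a" "0\<le>b" "0\<le>c" "0\<le>d" "0\<le>a'" "0\<le>b'" "0\<le>c'" "0\<le>d'"
    "a'*d'-b'*c' = 1" "a+2*c = 2*a'+c'" "b+2*d = 2*b'+d'" "c = a'+c'" "d = b'+d'"
  shows False
proof -
  have "c' = 0" "d' = 0" using assms by linarith+
  then show False using assms(9) by simp
qed

lemma BC_int:
  fixes a b c d a' b' c' d' :: int
  assumes "0\<le>a" "0\<le>b" "0\<le>c" "0\<le>d" "0\<le>a'" "0\<le>b'" "0\<le>c'" "0\<le>d'"
    "a'*d'-b'*c' = 1" "a = 2*a'+c'" "b = 2*b'+d'" "2*a+c = a'+c'" "2*b+d = b'+d'"
  shows False
proof -
  have "c' = 0" "d' = 0" using assms by linarith+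
  then show False using assms(9) by simp
qed

lemma eqs:
  fixes M N Q R :: "int^2^2"
  assumes "M ** Q = N ** R"
  shows "M$1$1 * Q$1$1 + M$1$2 * Q$2$1 = N$1$1 * R$1$1 + N$1$2 * R$2$1"
    "M$1$1 * Q$1$2 + M$1$2 * Q$2$2 = N$1$1 * R$1$2 + N$1$2 * R$2$2"
    "M$2$1 * Q$1$1 + M$2$2 * Q$2$1 = N$2$1 * R$1$1 + N$2$2 * R$2$1"
    "M$2$1 * Q$1$2 + M$2$2 * Q$2$2 = N$2$1 * R$1$2 + N$2$2 * R$2$2"
  using arg_cong[OF assms, of "\<lambda>X. X$1$1"] arg_cong[OF assms, of "\<lambda>X. X$1$2"]
    arg_cong[OF assms, of "\<lambda>X. X$2$1"] arg_cong[OF assms, of "\<lambda>X. X$2$2"]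
  by (simp_all only: ent)

lemma AB: assumes q: "inv2 Q" and r: "inv2 R" and h: "matA ** Q = matB ** R" shows False
proof -
  note e = eqs[OF h, unfolded entA entB]
  show False using AB_int[of "Q$1$1" "Q$1$2" "Q$2$1" "Q$2$2" "R$1$1" "R$1$2" "R$2$1" "R$2$2"] q r e
    unfolding inv2_def by linarith
qed

lemma AC: assumes q: "inv2 Q" and r: "inv2 R" and h: "matA ** Q = matC ** R" shows False
proof -
  note e = eqs[OF h, unfolded entA entC]
  show False using AC_int[of "Q$1$1" "Q$1$2" "Q$2$1" "Q$2$2" "R$1$1" "R$1$2" "R$2$1" "R$2$2"] q r e
    unfolding inv2_def by linarith
qed

lemma BC: assumes q: "inv2 Q" and r: "inv2 R" and h: "matB ** Q = matC ** R" shows False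
proof -
  note e = eqs[OF h, unfolded entB entC]
  show False using BC_int[of "Q$1$1" "Q$1$2" "Q$2$1" "Q$2$2" "R$1$1" "R$1$2" "R$2$1" "R$2$2"] q r e
    unfolding inv2_def by linarith
qed

lemma first: "M \<in> {matA, matB, matC} \<Longrightarrow> N \<in> {matA, matB, matC} \<Longrightarrow> inv2 Q \<Longrightarrow> inv2 R
  \<Longrightarrow> M ** Q = N ** R \<Longrightarrow> M = N"
  using AB[of Q R] AC[of Q R] BC[of Q R] AB[of R Q] AC[of R Q] BC[of R Q] by auto

lemma notI: "M \<in> {matA, matB, matC} \<Longrightarrow> inv2 Q \<Longrightarrow> M ** Q \<noteq> mat 1"
proof
  assume m: "M \<in> {matA, matB, matC}" and q: "inv2 Q" and h: "M ** Q = mat 1"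
  have "M ** Q = mat 1 ** mat 1" using h by simp
  from eqs[OF this] m q show False
    unfolding inv2_def entI by (auto simp: entA entB entC)
qed

lemma cancel: fixes M Q R :: "int^2^2" assumes m: "M \<in> {matA, matB, matC}" and h: "M ** Q = M ** R" shows "Q = R"
proof -
  note e = eqs[OF h]
  from m have "M = matA \<or> M = matB \<or> M = matC" by simp
  then show ?thesis
  proof (elim disjE)
    assume "M = matA" then show ?thesis using e unfolding meq entA by simp
  next
    assume "M = matB" then show ?thesis using e unfolding meq entB by simp
  next
    assume "M = matC" then show ?thesis using e unfolding meq entC by simp
  qed
qed

lemma main: "set ws \<subseteq> {matA, matB, matC} \<Longrightarrow> set vs \<subseteq> {matA, matB, matC}
   \<Longrightarrow> word_prod ws = word_prod vs \<Longrightarrow> ws = vs"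
proof (induction ws arbitrary: vs)
  case Nil
  then show ?case
    using notI[of "hd vs" "word_prod (tl vs)"] inv_wp[of "tl vs"]
    by (cases vs) (auto simp: word_prod_def)
next
  case (Cons w ws)
  show ?case
  proof (cases vs)
    case Nil
    then show ?thesis using Cons.prems notI[of w "word_prod ws"] inv_wp[of ws]
      by (auto simp: word_prod_def)
  next
    case (Cons v vs')
    have e: "w ** word_prod ws = v ** word_prod vs'"
      using Cons.prems(3) \<open>vs = v # vs'\<close> by (simp add: word_prod_def)
    have w: "w \<in> {matA, matB, matC}" and v: "v \<in> {matA, matB, matC}"
      using Cons.prems \<open>vs = v # vs'\<close> by auto
    have "w = v" using first[OF w v inv_wp inv_wp e] Cons.prems \<open>vs = v # vs'\<close> by auto
    then have "word_prod ws = word_prod vs'" using cancel[OF w] e by simp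
    then have "ws = vs'" using Cons.IH Cons.prems \<open>vs = v # vs'\<close> by auto
    then show ?thesis using \<open>w = v\<close> \<open>vs = v # vs'\<close> by simp
  qed
qed

theorem proposition1:
  fixes ws vs :: "(int^2^2) list"
  assumes "ws \<noteq> []" and "vs \<noteq> []"
    and "set ws \<subseteq> {matA, matB, matC}" and "set vs \<subseteq> {matA, matB, matC}"
    and "word_prod ws = word_prod vs"
  shows "ws = vs"
  using main assms by blast

end
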